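(* There exist no cones in $\mathbb{R}^3$ with proper biharmonic Gauss map. That is, for every curve $\sigma:I\to\mathbb{S}^2$ parametrized by arc length, the Gauss map of the cone $(0,\infty)\times I\to\mathbb{R}^3$, $(t,s)\mapsto t\,\sigma(s)$, is not proper biharmonic.
   Context: The cone over $\sigma$ is an immersed surface in $\mathbb{R}^3$ with induced metric $dt^2+t^2ds^2$, oriented by the unit normal $N(s)$ of $\sigma$ in $\mathbb{S}^2$. Its Gauss map sends a point to its oriented tangent plane in the Grassmannian of oriented 2-planes in $\mathbb{R}^3$ with the standard metric (identify $T_PG=P^*\otimes P^\perp$, declaring $\{e_i^*\otimes e_3\}$ orthonormal). A map with tension field $\tau(\phi)=\operatorname{trace}\nabla d\phi$ is biharmonic if $-\Delta\tau(\phi)-\operatorname{trace}R^N(d\phi,\tau(\phi))d\phi=0$ ($\Delta=-\operatorname{trace}(\nabla^\phi)^2$, $R^N(X,Y)=\nabla_X\nabla_Y-\nabla_Y\nabla_X-\nabla_{[X,Y]}$), harmonic if $\tau(\phi)=0$, and proper biharmonic if biharmonic but not harmonic. *)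

theory Defs
  imports "HOL-Analysis.Analysis" "HOL-Analysis.Cross3"
begin

fun vderiv :: "nat \<Rightarrow> (real \<Rightarrow> 'a::real_normed_vector) \<Rightarrow> real \<Rightarrow> 'a" where
  "vderiv 0 f = f"
| "vderiv (Suc n) f = (\<lambda>s. vector_derivative (vderiv n f) (at s))"

definition smooth_on :: "real set \<Rightarrow> (real \<Rightarrow> 'a::real_normed_vector) \<Rightarrow> bool" where
  "smooth_on I f \<longleftrightarrow> (\<forall>n. \<forall>s\<in>I. (vderiv n f has_vector_derivative vderiv (Suc n) f s) (at s))"

definition pd :: "nat \<Rightarrow> (real \<times> real \<Rightarrow> 'a::real_normed_vector) \<Rightarrow> real \<times> real \<Rightarrow> 'a" where
  "pd i F p = vector_derivative (\<lambda>h. F (p + (if i = 1 then (h, 0) else (0, h)))) (at 0)"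

type_synonym metric2 = "nat \<Rightarrow> nat \<Rightarrow> real \<times> real \<Rightarrow> real"

definition induced_metric :: "(real \<times> real \<Rightarrow> real^3) \<Rightarrow> metric2" where
  "induced_metric X i j p = pd i X p \<bullet> pd j X p"

definition metric_det :: "metric2 \<Rightarrow> real \<times> real \<Rightarrow> real" where
  "metric_det g p = g 1 1 p * g 2 2 p - g 1 2 p * g 2 1 p"

definition ginv :: "metric2 \<Rightarrow> metric2" where
  "ginv g i j p =
     (if i = 1 \<and> j = 1 then g 2 2 p
      else if i = 2 \<and> j = 2 then g 1 1 p
      else - g i j p) / metric_det g p"

definition christ :: "metric2 \<Rightarrow> nat \<Rightarrow> nat \<Rightarrow> nat \<Rightarrow> real \<times> real \<Rightarrow> real" where
  "christ g k i j p = (1/2) * (\<Sum>l\<in>{1,2}. ginv g k l p *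
       (pd i (g j l) p + pd j (g i l) p - pd l (g i j) p))"

text \<open>Pull-back of the Levi-Civita connection of the unit sphere along phi, applied to a
  section V along phi: tangential projection of the ambient derivative (Gauss formula).\<close>
definition cov :: "nat \<Rightarrow> (real \<times> real \<Rightarrow> real^3) \<Rightarrow> (real \<times> real \<Rightarrow> real^3)
                    \<Rightarrow> real \<times> real \<Rightarrow> real^3" where
  "cov i \<phi> V p = pd i V p - (pd i V p \<bullet> \<phi> p) *\<^sub>R \<phi> p"

text \<open>Riemann curvature tensor of the unit sphere S^2 with the convention
  R(X,Y) = nabla_X nabla_Y - nabla_Y nabla_X - nabla_[X,Y].\<close>
definition curvS2 :: "real^3 \<Rightarrow> real^3 \<Rightarrow> real^3 \<Rightarrow> real^3" where
  "curvS2 X Y Z = (Y \<bullet> Z) *\<^sub>R X - (X \<bullet> Z) *\<^sub>R Y"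

definition tension :: "metric2 \<Rightarrow> (real \<times> real \<Rightarrow> real^3) \<Rightarrow> real \<times> real \<Rightarrow> real^3" where
  "tension g \<phi> p = (\<Sum>i\<in>{1,2}. \<Sum>j\<in>{1,2}. ginv g i j p *\<^sub>R
       (cov i \<phi> (pd j \<phi>) p - (\<Sum>k\<in>{1,2}. christ g k i j p *\<^sub>R pd k \<phi> p)))"

text \<open>trace (nabla^phi)^2 V  (= - Delta V with the rough Laplacian Delta = - trace (nabla^phi)^2).\<close>
definition trace_hess :: "metric2 \<Rightarrow> (real \<times> real \<Rightarrow> real^3) \<Rightarrow> (real \<times> real \<Rightarrow> real^3)
                          \<Rightarrow> real \<times> real \<Rightarrow> real^3" where
  "trace_hess g \<phi> V p = (\<Sum>i\<in>{1,2}. \<Sum>j\<in>{1,2}. ginv g i j p *\<^sub>R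
       (cov i \<phi> (cov j \<phi> V) p - (\<Sum>k\<in>{1,2}. christ g k i j p *\<^sub>R cov k \<phi> V p)))"

definition bitension :: "metric2 \<Rightarrow> (real \<times> real \<Rightarrow> real^3) \<Rightarrow> real \<times> real \<Rightarrow> real^3" where
  "bitension g \<phi> p = trace_hess g \<phi> (tension g \<phi>) p
     - (\<Sum>i\<in>{1,2}. \<Sum>j\<in>{1,2}. ginv g i j p *\<^sub>R curvS2 (pd i \<phi> p) (tension g \<phi> p) (pd j \<phi> p))"

definition harmonic_on :: "metric2 \<Rightarrow> (real \<times> real \<Rightarrow> real^3) \<Rightarrow> (real \<times> real) set \<Rightarrow> bool" where
  "harmonic_on g \<phi> U \<longleftrightarrow> (\<forall>p\<in>U. tension g \<phi> p = 0)"

definition biharmonic_on :: "metric2 \<Rightarrow> (real \<times> real \<Rightarrow> real^3) \<Rightarrow> (real \<times> real) set \<Rightarrow> bool" where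
  "biharmonic_on g \<phi> U \<longleftrightarrow> (\<forall>p\<in>U. bitension g \<phi> p = 0)"

definition proper_biharmonic_on :: "metric2 \<Rightarrow> (real \<times> real \<Rightarrow> real^3) \<Rightarrow> (real \<times> real) set \<Rightarrow> bool" where
  "proper_biharmonic_on g \<phi> U \<longleftrightarrow> biharmonic_on g \<phi> U \<and> \<not> harmonic_on g \<phi> U"

definition cone :: "(real \<Rightarrow> real^3) \<Rightarrow> real \<times> real \<Rightarrow> real^3" where
  "cone \<sigma> p = fst p *\<^sub>R \<sigma> (snd p)"

text \<open>Gauss map of an immersed surface X(x1,x2), oriented by the frame (d_1 X, d_2 X),
  with the Grassmannian of oriented 2-planes in R^3 identified isometrically with the unit
  sphere S^2 via the oriented unit normal.\<close>
definition gauss_map :: "(real \<times> real \<Rightarrow> real^3) \<Rightarrow> real \<times> real \<Rightarrow> real^3" where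
  "gauss_map X p = (1 / norm (cross3 (pd 1 X p) (pd 2 X p))) *\<^sub>R cross3 (pd 1 X p) (pd 2 X p)"

end

theory Submission imports Defs begin
declare One_nat_def[simp del]

lemma cross_cross3: "cross3 (x::real^3) (cross3 y z) = (x \<bullet> z) *\<^sub>R y - (x \<bullet> y) *\<^sub>R z"
  unfolding vec_eq_iff forall_3 by (simp add: cross3_def inner_vec_def sum_3 algebra_simps)

lemma bb_cross: "bounded_bilinear (cross3 :: real^3 \<Rightarrow> real^3 \<Rightarrow> real^3)"
  using bilinear_conv_bounded_bilinear bilinear_cross by blast

lemma hvd_cross:
  assumes "(f has_vector_derivative f') (at x)" "(g has_vector_derivative g') (at x)"
  shows "((\<lambda>x. cross3 (f x) (g x)) has_vector_derivative (cross3 f' (g x) + cross3 (f x) g')) (at x)"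
  using bounded_bilinear.has_vector_derivative[OF bb_cross assms] by (simp add: add.commute)

lemma hfd_inner:
  fixes f g :: "real \<Rightarrow> 'a::real_inner"
  assumes "(f has_vector_derivative f') (at x)" "(g has_vector_derivative g') (at x)"
  shows "((\<lambda>x. f x \<bullet> g x) has_field_derivative (f' \<bullet> g x + f x \<bullet> g')) (at x)"
  using bounded_bilinear.has_vector_derivative[OF bounded_bilinear_inner assms]
  by (simp add: has_real_derivative_iff_has_vector_derivative add.commute)

lemma pd1_sep:
  fixes F :: "real \<times> real \<Rightarrow> 'a::real_normed_vector"
  assumes U: "open U" "p \<in> U" and F: "\<And>q. q \<in> U \<Longrightarrow> F q = c (fst q) *\<^sub>R G (snd q)"
    and c: "(c has_field_derivative c') (at (fst p))"
  shows "pd 1 F p = c' *\<^sub>R G (snd p)"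
proof -
  let ?S = "(\<lambda>h. p + (h, 0)) -` U"
  have oS: "open ?S" by (rule continuous_open_vimage[OF U(1)]) (intro continuous_intros)
  have 0: "0 \<in> ?S" using U by (simp add: zero_prod_def[symmetric])
  have "((\<lambda>h. c (fst p + h)) has_field_derivative c') (at 0)"
    using c DERIV_shift[of c c' 0 "fst p"] by (simp add: add.commute)
  then have "((\<lambda>h. c (fst p + h) *\<^sub>R G (snd p)) has_vector_derivative c' *\<^sub>R G (snd p)) (at 0)"
    by (auto intro!: derivative_eq_intros)
  then have "((\<lambda>h. F (p + (h, 0))) has_vector_derivative c' *\<^sub>R G (snd p)) (at 0)"
    by (rule has_vector_derivative_transform_within_open[OF _ oS 0]) (simp add: F)
  then show ?thesis unfolding pd_def by (simp add: vector_derivative_at)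
qed

lemma pd2_sep:
  fixes F :: "real \<times> real \<Rightarrow> 'a::real_normed_vector"
  assumes U: "open U" "p \<in> U" and F: "\<And>q. q \<in> U \<Longrightarrow> F q = c (fst q) *\<^sub>R G (snd q)"
    and G: "(G has_vector_derivative G') (at (snd p))"
  shows "pd 2 F p = c (fst p) *\<^sub>R G'"
proof -
  let ?S = "(\<lambda>h. p + (0, h)) -` U"
  have oS: "open ?S" by (rule continuous_open_vimage[OF U(1)]) (intro continuous_intros)
  have 0: "0 \<in> ?S" using U by (simp add: zero_prod_def[symmetric])
  have "((\<lambda>h. G (snd p + h)) has_vector_derivative G') (at 0)"
  proof -
    have "((\<lambda>h. snd p + h) has_vector_derivative 1) (at 0)" by (auto intro!: derivative_eq_intros)
    from vector_diff_chain_at[OF this] G show ?thesis by (simp add: o_def)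
  qed
  then have "((\<lambda>h. c (fst p) *\<^sub>R G (snd p + h)) has_vector_derivative c (fst p) *\<^sub>R G') (at 0)"
    by (auto intro!: derivative_eq_intros)
  then have "((\<lambda>h. F (p + (0, h))) has_vector_derivative c (fst p) *\<^sub>R G') (at 0)"
    by (rule has_vector_derivative_transform_within_open[OF _ oS 0]) (simp add: F)
  then show ?thesis unfolding pd_def by (simp add: vector_derivative_at)
qed

lemma zero_on_open_deriv:
  fixes f :: "real \<Rightarrow> real"
  assumes "open W" "x \<in> W" "\<And>y. y \<in> W \<Longrightarrow> f y = 0" "(f has_field_derivative D) (at x)"
  shows "D = 0"
proof -
  have "(f has_field_derivative 0) (at x)"
    by (rule has_field_derivative_transform_within_open[of "\<lambda>_. 0" 0 x W]) (use assms in auto)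
  then show ?thesis using assms(4) DERIV_unique by blast
qed

locale cframe =
  fixes I :: "real set" and a b N :: "real \<Rightarrow> real^3" and k k1 k2 k3 :: "real \<Rightarrow> real"
  assumes oI: "open I"
    and aa: "\<And>s. s \<in> I \<Longrightarrow> a s \<bullet> a s = 1"
    and bb: "\<And>s. s \<in> I \<Longrightarrow> b s \<bullet> b s = 1"
    and ab: "\<And>s. s \<in> I \<Longrightarrow> a s \<bullet> b s = 0"
    and Ndef: "\<And>s. s \<in> I \<Longrightarrow> N s = cross3 (a s) (b s)"
    and da: "\<And>s. s \<in> I \<Longrightarrow> (a has_vector_derivative b s) (at s)"
    and db: "\<And>s. s \<in> I \<Longrightarrow> (b has_vector_derivative (k s *\<^sub>R N s - a s)) (at s)"
    and dN: "\<And>s. s \<in> I \<Longrightarrow> (N has_vector_derivative (- k s *\<^sub>R b s)) (at s)"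
    and dk: "\<And>s. s \<in> I \<Longrightarrow> (k has_field_derivative k1 s) (at s)"
    and dk1: "\<And>s. s \<in> I \<Longrightarrow> (k1 has_field_derivative k2 s) (at s)"
    and dk2: "\<And>s. s \<in> I \<Longrightarrow> (k2 has_field_derivative k3 s) (at s)"
begin

abbreviation "U \<equiv> {(0::real)<..} \<times> I"
abbreviation "g \<equiv> induced_metric (cone a)"
abbreviation "phi \<equiv> gauss_map (cone a)"

lemma oU: "open U" using oI by (intro open_Times) auto

lemma NN: "s \<in> I \<Longrightarrow> N s \<bullet> N s = 1"
  using norm_cross_dot[of "a s" "b s"] aa[of s] bb[of s] ab[of s] Ndef[of s]
  by (simp add: dot_square_norm[symmetric] power2_eq_square norm_eq_sqrt_inner)

lemma aN: "s \<in> I \<Longrightarrow> a s \<bullet> N s = 0" using Ndef dot_cross_self by simp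
lemma bN: "s \<in> I \<Longrightarrow> b s \<bullet> N s = 0" using Ndef dot_cross_self by simp

lemmas frame = aa bb NN ab aN bN
  ab[THEN trans[OF inner_commute]] aN[THEN trans[OF inner_commute]] bN[THEN trans[OF inner_commute]]

lemma cone_pd1: "q \<in> U \<Longrightarrow> pd 1 (cone a) q = a (snd q)"
  using pd1_sep[OF oU, of q "cone a" "\<lambda>t. t" a 1] by (simp add: cone_def)

lemma cone_pd2: "q \<in> U \<Longrightarrow> pd 2 (cone a) q = fst q *\<^sub>R b (snd q)"
  using pd2_sep[OF oU, of q "cone a" "\<lambda>t. t" a "b (snd q)"] da by (auto simp: cone_def)

lemma gU: "q \<in> U \<Longrightarrow> g 1 1 q = 1 \<and> g 1 2 q = 0 \<and> g 2 1 q = 0 \<and> g 2 2 q = (fst q)^2"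
  by (auto simp: induced_metric_def cone_pd1 cone_pd2 frame power2_eq_square)


lemma pdt:
  fixes F :: "real \<times> real \<Rightarrow> real"
  assumes "q \<in> U" "\<And>q. q \<in> U \<Longrightarrow> F q = c (fst q)" "(c has_field_derivative c') (at (fst q))"
  shows "pd 1 F q = c'" "pd 2 F q = 0"
  using pd1_sep[OF oU assms(1), of F c "\<lambda>_. 1" c'] pd2_sep[OF oU assms(1), of F c "\<lambda>_. 1" 0] assms
  by auto

lemma gpd: assumes "q \<in> U"
  shows "pd 1 (g 1 1) q = 0" "pd 2 (g 1 1) q = 0" "pd 1 (g 1 2) q = 0" "pd 2 (g 1 2) q = 0"
    "pd 1 (g 2 1) q = 0" "pd 2 (g 2 1) q = 0" "pd 1 (g 2 2) q = 2 * fst q" "pd 2 (g 2 2) q = 0"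
proof -
  have c0: "((\<lambda>_. c) has_field_derivative 0) (at x)" for c x :: real by simp
  have c2: "((\<lambda>t. t^2) has_field_derivative 2 * x) (at x)" for x :: real
    by (auto intro!: derivative_eq_intros)
  show "pd 1 (g 1 1) q = 0" "pd 2 (g 1 1) q = 0"
    using pdt[OF assms, of "g 1 1" "\<lambda>_. 1", OF _ c0] gU by auto
  show "pd 1 (g 1 2) q = 0" "pd 2 (g 1 2) q = 0"
    using pdt[OF assms, of "g 1 2" "\<lambda>_. 0", OF _ c0] gU by auto
  show "pd 1 (g 2 1) q = 0" "pd 2 (g 2 1) q = 0"
    using pdt[OF assms, of "g 2 1" "\<lambda>_. 0", OF _ c0] gU by auto
  show "pd 1 (g 2 2) q = 2 * fst q" "pd 2 (g 2 2) q = 0"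
    using pdt[OF assms, of "g 2 2" "\<lambda>t. t^2", OF _ c2] gU by auto
qed

lemma ginvU: assumes "q \<in> U"
  shows "ginv g 1 1 q = 1" "ginv g 1 2 q = 0" "ginv g 2 1 q = 0" "ginv g 2 2 q = 1 / (fst q)^2"
  using gU[OF assms] assms by (auto simp: ginv_def metric_det_def)

lemma christU: assumes "q \<in> U"
  shows "christ g 1 1 1 q = 0" "christ g 1 1 2 q = 0" "christ g 1 2 1 q = 0"
    "christ g 1 2 2 q = - fst q" "christ g 2 1 1 q = 0" "christ g 2 1 2 q = 1 / fst q"
    "christ g 2 2 1 q = 1 / fst q" "christ g 2 2 2 q = 0"
  using assms by (auto simp: christ_def ginvU[OF assms] gpd[OF assms] power2_eq_square)

lemma phiU: "q \<in> U \<Longrightarrow> phi q = N (snd q)"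
proof -
  assume q: "q \<in> U"
  then have t: "fst q > 0" and s: "snd q \<in> I" by auto
  have "cross3 (pd 1 (cone a) q) (pd 2 (cone a) q) = fst q *\<^sub>R N (snd q)"
    using q s by (simp add: cone_pd1 cone_pd2 cross_mult_right Ndef)
  moreover have "norm (N (snd q)) = 1" using NN[OF s] by (simp add: norm_eq_sqrt_inner)
  ultimately show ?thesis using t by (simp add: gauss_map_def)
qed

lemma dN1: "s \<in> I \<Longrightarrow> ((\<lambda>s. - k s *\<^sub>R b s) has_vector_derivative
     (k s *\<^sub>R a s - k1 s *\<^sub>R b s - (k s)^2 *\<^sub>R N s)) (at s)"
proof -
  assume s: "s \<in> I"
  have "((\<lambda>s. - k s) has_field_derivative - k1 s) (at s)" using dk[OF s] by (auto intro: derivative_eq_intros)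
  from has_vector_derivative_scaleR[OF this db[OF s]] show ?thesis
    by (simp add: algebra_simps power2_eq_square)
qed

lemma phi_pd: assumes "q \<in> U"
  shows "pd 1 phi q = 0" "pd 2 phi q = - k (snd q) *\<^sub>R b (snd q)"
  using pd1_sep[OF oU assms, of phi "\<lambda>_. 1" N 0] pd2_sep[OF oU assms, of phi "\<lambda>_. 1" N] assms
    phiU dN by auto

lemma phi_pd2: assumes "q \<in> U"
  shows "pd 1 (pd 1 phi) q = 0" "pd 2 (pd 1 phi) q = 0" "pd 1 (pd 2 phi) q = 0"
    "pd 2 (pd 2 phi) q = k (snd q) *\<^sub>R a (snd q) - k1 (snd q) *\<^sub>R b (snd q) - (k (snd q))^2 *\<^sub>R N (snd q)"
  using pd1_sep[OF oU assms, of "pd 1 phi" "\<lambda>_. 0" N 0] pd2_sep[OF oU assms, of "pd 1 phi" "\<lambda>_. 0" N "- k (snd q) *\<^sub>R b (snd q)"]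
    pd1_sep[OF oU assms, of "pd 2 phi" "\<lambda>_. 1" "\<lambda>s. - k s *\<^sub>R b s" 0]
    pd2_sep[OF oU assms, of "pd 2 phi" "\<lambda>_. 1" "\<lambda>s. - k s *\<^sub>R b s"] assms
    phi_pd dN1 dN by auto


definition "T s = k s *\<^sub>R a s - k1 s *\<^sub>R b s"

lemma tensionU: assumes "q \<in> U" shows "tension g phi q = (1 / (fst q)^2) *\<^sub>R T (snd q)"
proof -
  have s: "snd q \<in> I" using assms by auto
  show ?thesis using s
    by (simp add: tension_def cov_def ginvU[OF assms] christU[OF assms] phi_pd[OF assms]
        phi_pd2[OF assms] phiU[OF assms] T_def inner_diff_left inner_add_left frame algebra_simps power2_eq_square)
qed


lemma hvd_eq: "(f has_vector_derivative x) F \<Longrightarrow> x = y \<Longrightarrow> (f has_vector_derivative y) F" by simp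

definition "Q s = (2 * k1 s) *\<^sub>R a s + (k s - k2 s) *\<^sub>R b s"
definition "R s = (3 * k2 s - k s) *\<^sub>R a s + (3 * k1 s - k3 s) *\<^sub>R b s"

lemma dT: assumes s: "s \<in> I"
  shows "(T has_vector_derivative (2 * k1 s) *\<^sub>R a s + (k s - k2 s) *\<^sub>R b s - (k s * k1 s) *\<^sub>R N s) (at s)"
  unfolding T_def[abs_def]
  by (rule hvd_eq[OF has_vector_derivative_diff[OF has_vector_derivative_scaleR[OF dk[OF s] da[OF s]]
        has_vector_derivative_scaleR[OF dk1[OF s] db[OF s]]]]) (simp add: vec_eq_iff algebra_simps)

lemma dQ: assumes s: "s \<in> I"
  shows "(Q has_vector_derivative R s + ((k s - k2 s) * k s) *\<^sub>R N s) (at s)"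
proof -
  have 1: "((\<lambda>s. 2 * k1 s) has_field_derivative 2 * k2 s) (at s)" using dk1[OF s] by (auto intro!: derivative_eq_intros)
  have 2: "((\<lambda>s. k s - k2 s) has_field_derivative k1 s - k3 s) (at s)" using dk[OF s] dk2[OF s] by (auto intro!: derivative_eq_intros)
  show ?thesis unfolding Q_def[abs_def]
    by (rule hvd_eq[OF has_vector_derivative_add[OF has_vector_derivative_scaleR[OF 1 da[OF s]]
        has_vector_derivative_scaleR[OF 2 db[OF s]]]]) (simp add: R_def vec_eq_iff algebra_simps)
qed


lemma d_inv2: fixes t :: real shows "t > 0 \<Longrightarrow> ((\<lambda>t. 1 / t^2) has_field_derivative (-2 / t^3)) (at t)"
  by (auto intro!: derivative_eq_intros simp: field_simps power2_eq_square power3_eq_cube)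

lemma d_inv3: fixes t :: real shows "t > 0 \<Longrightarrow> ((\<lambda>t. -2 / t^3) has_field_derivative (6 / t^4)) (at t)"
  by (auto intro!: derivative_eq_intros simp: field_simps power2_eq_square power3_eq_cube power4_eq_xxxx)

abbreviation "V \<equiv> tension g phi"

lemma TN: "s \<in> I \<Longrightarrow> T s \<bullet> N s = 0" by (simp add: T_def inner_diff_left frame)
lemma QN: "s \<in> I \<Longrightarrow> Q s \<bullet> N s = 0" by (simp add: Q_def inner_add_left frame)
lemma RN: "s \<in> I \<Longrightarrow> R s \<bullet> N s = 0" by (simp add: R_def inner_add_left frame)

lemma V1: assumes "q \<in> U" shows "cov 1 phi V q = (-2 / (fst q)^3) *\<^sub>R T (snd q)"
proof -
  have t: "fst q > 0" and s: "snd q \<in> I" using assms by auto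
  have "pd 1 V q = (-2 / (fst q)^3) *\<^sub>R T (snd q)"
    by (rule pd1_sep[OF oU assms _ d_inv2[OF t]]) (rule tensionU)
  then show ?thesis using s by (simp add: cov_def phiU[OF assms] TN)
qed

lemma V2: assumes "q \<in> U" shows "cov 2 phi V q = (1 / (fst q)^2) *\<^sub>R Q (snd q)"
proof -
  have t: "fst q > 0" and s: "snd q \<in> I" using assms by auto
  have "pd 2 V q = (1 / (fst q)^2) *\<^sub>R ((2 * k1 (snd q)) *\<^sub>R a (snd q) + (k (snd q) - k2 (snd q)) *\<^sub>R b (snd q) - (k (snd q) * k1 (snd q)) *\<^sub>R N (snd q))"
    by (rule pd2_sep[OF oU assms _ dT[OF s]]) (rule tensionU)
  then show ?thesis using s
    using t by (simp add: cov_def phiU[OF assms] Q_def inner_add_left inner_diff_left frame)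
      (simp add: vec_eq_iff field_simps)
qed

lemma VV11: assumes "q \<in> U" shows "cov 1 phi (cov 1 phi V) q = (6 / (fst q)^4) *\<^sub>R T (snd q)"
proof -
  have t: "fst q > 0" and s: "snd q \<in> I" using assms by auto
  have "pd 1 (cov 1 phi V) q = (6 / (fst q)^4) *\<^sub>R T (snd q)"
    by (rule pd1_sep[OF oU assms _ d_inv3[OF t]]) (rule V1)
  then show ?thesis using s by (simp add: cov_def phiU[OF assms] TN)
qed

lemma VV22: assumes "q \<in> U" shows "cov 2 phi (cov 2 phi V) q = (1 / (fst q)^2) *\<^sub>R R (snd q)"
proof -
  have t: "fst q > 0" and s: "snd q \<in> I" using assms by auto
  have "pd 2 (cov 2 phi V) q = (1 / (fst q)^2) *\<^sub>R (R (snd q) + ((k (snd q) - k2 (snd q)) * k (snd q)) *\<^sub>R N (snd q))"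
    by (rule pd2_sep[OF oU assms _ dQ[OF s]]) (rule V2)
  then show ?thesis using s t
    by (simp add: cov_def phiU[OF assms] RN inner_add_left frame power2_eq_square)
      (simp add: vec_eq_iff field_simps)
qed


lemma bit1: assumes s: "s \<in> I"
  shows "bitension g phi (1, s) = (3 * k s + 3 * k2 s + (k s)^3) *\<^sub>R a s - (k1 s + k3 s) *\<^sub>R b s"
proof -
  have q: "(1, s) \<in> U" using s by auto
  show ?thesis using s
    by (simp add: bitension_def trace_hess_def curvS2_def ginvU[OF q] christU[OF q] phi_pd[OF q]
        V1[OF q] V2[OF q] VV11[OF q] VV22[OF q] tensionU[OF q] T_def R_def
        inner_diff_left inner_add_left inner_diff_right inner_add_right frame)
      (simp add: vec_eq_iff algebra_simps power2_eq_square power3_eq_cube)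
qed


lemma not_proper: "\<not> proper_biharmonic_on g phi U"
proof
  assume "proper_biharmonic_on g phi U"
  then have bih: "\<And>q. q \<in> U \<Longrightarrow> bitension g phi q = 0"
    by (auto simp: proper_biharmonic_on_def biharmonic_on_def)
  have e1: "3 * k s + 3 * k2 s + (k s)^3 = 0" and e2: "k1 s + k3 s = 0" if s: "s \<in> I" for s
  proof -
    have z: "(3 * k s + 3 * k2 s + (k s)^3) *\<^sub>R a s - (k1 s + k3 s) *\<^sub>R b s = 0"
      using bih[of "(1, s)"] bit1[OF s] s by auto
    from arg_cong[OF z, of "\<lambda>v. v \<bullet> a s"] s show "3 * k s + 3 * k2 s + (k s)^3 = 0"
      by (simp add: inner_diff_left frame)
    from arg_cong[OF z, of "\<lambda>v. v \<bullet> b s"] s show "k1 s + k3 s = 0"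
      by (simp add: inner_diff_left frame)
  qed
  have e3: "(k s)^2 * k1 s = 0" if s: "s \<in> I" for s
  proof -
    have "((\<lambda>s. - k s - (k s)^3 / 3) has_field_derivative - k1 s - (k s)^2 * k1 s) (at s)"
      using dk[OF s] by (auto intro!: derivative_eq_intros simp: power2_eq_square)
    then have "(k2 has_field_derivative - k1 s - (k s)^2 * k1 s) (at s)"
      by (rule has_field_derivative_transform_within_open[OF _ oI s]) (use e1 in \<open>fastforce simp: field_simps\<close>)
    then have "k3 s = - k1 s - (k s)^2 * k1 s" using dk2[OF s] DERIV_unique by blast
    then show ?thesis using e2[OF s] by simp
  qed
  have kz: "k s = 0" if s: "s \<in> I" for s
  proof (rule ccontr)
    assume nz: "k s \<noteq> 0"
    have "continuous_on I k"
      using dk by (intro continuous_at_imp_continuous_on) (auto intro: DERIV_isCont)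
    then have oW: "open (I \<inter> k -` (- {0}))" using oI by (intro continuous_open_preimage) auto
    have "k1 y = 0" if "y \<in> I \<inter> k -` (- {0})" for y using e3[of y] that by auto
    then have "k2 s = 0" using zero_on_open_deriv[OF oW, of s k1 "k2 s"] s nz dk1[OF s] by auto
    with e1[OF s] have "k s * (3 + (k s)^2) = 0" by (simp add: algebra_simps power3_eq_cube power2_eq_square)
    moreover have "3 + (k s)^2 > 0" by (simp add: add_pos_nonneg)
    ultimately show False using nz by simp
  qed
  have k1z: "k1 s = 0" if s: "s \<in> I" for s
    using zero_on_open_deriv[OF oI s, of k "k1 s"] kz dk[OF s] by auto
  have "harmonic_on g phi U"
    unfolding harmonic_on_def using tensionU kz k1z by (auto simp: T_def)
  with \<open>proper_biharmonic_on g phi U\<close> show False by (simp add: proper_biharmonic_on_def)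
qed

end

lemma expand3:
  fixes a b v :: "real^3"
  assumes aa: "a \<bullet> a = 1" and bb: "b \<bullet> b = 1" and ab: "a \<bullet> b = 0"
  shows "v = (v \<bullet> a) *\<^sub>R a + (v \<bullet> b) *\<^sub>R b + (v \<bullet> cross3 a b) *\<^sub>R cross3 a b"
proof -
  define N where "N = cross3 a b"
  have NN: "N \<bullet> N = 1"
    using norm_cross_dot[of a b] aa bb ab unfolding N_def
    by (simp add: dot_square_norm[symmetric] power2_eq_square norm_eq_sqrt_inner)
  have aN: "a \<bullet> N = 0" "b \<bullet> N = 0" unfolding N_def using dot_cross_self by auto
  define w where "w = v - ((v \<bullet> a) *\<^sub>R a + (v \<bullet> b) *\<^sub>R b + (v \<bullet> N) *\<^sub>R N)"
  have wa: "w \<bullet> a = 0" "w \<bullet> b = 0" "w \<bullet> N = 0"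
  proof -
    have sym: "b \<bullet> a = 0" "N \<bullet> a = 0" "N \<bullet> b = 0" using ab aN by (simp_all add: inner_commute)
    show "w \<bullet> a = 0" "w \<bullet> b = 0" "w \<bullet> N = 0"
      unfolding w_def using aa bb ab aN NN sym by (simp_all add: inner_diff_left inner_add_left)
  qed
  have "cross3 w N = 0"
    using cross_cross3[of w a b] wa unfolding N_def by (simp add: inner_commute)
  then have "w = 0"
    using cross_cross3[of N w N] NN wa by (simp add: inner_commute)
  then show ?thesis unfolding w_def N_def by (simp add: algebra_simps)
qed

theorem theorem4p4:
  fixes \<sigma> :: "real \<Rightarrow> real^3" and I :: "real set"
  assumes "open I" and "is_interval I"
    and "smooth_on I \<sigma>"
    and "\<forall>s\<in>I. norm (\<sigma> s) = 1"
    and "\<forall>s\<in>I. norm (vector_derivative \<sigma> (at s)) = 1"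
  shows "\<not> proper_biharmonic_on (induced_metric (cone \<sigma>)) (gauss_map (cone \<sigma>)) ({0<..} \<times> I)"
proof -
  define s1 where "s1 = vderiv (Suc 0) \<sigma>"
  define s2 where "s2 = vderiv (Suc (Suc 0)) \<sigma>"
  define s3 where "s3 = vderiv (Suc (Suc (Suc 0))) \<sigma>"
  define s4 where "s4 = vderiv (Suc (Suc (Suc (Suc 0)))) \<sigma>"
  define s5 where "s5 = vderiv (Suc (Suc (Suc (Suc (Suc 0))))) \<sigma>"
  have sm: "\<And>n s. s \<in> I \<Longrightarrow> (vderiv n \<sigma> has_vector_derivative vderiv (Suc n) \<sigma> s) (at s)"
    using assms(3) unfolding smooth_on_def by blast
  have d0: "(\<sigma> has_vector_derivative s1 s) (at s)" if "s \<in> I" for s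
    using sm[OF that, of 0] unfolding s1_def by simp
  have d1: "(s1 has_vector_derivative s2 s) (at s)" if "s \<in> I" for s
    using sm[OF that, of "Suc 0"] unfolding s1_def s2_def by simp
  have d2: "(s2 has_vector_derivative s3 s) (at s)" if "s \<in> I" for s
    using sm[OF that, of "Suc (Suc 0)"] unfolding s2_def s3_def by simp
  have d3: "(s3 has_vector_derivative s4 s) (at s)" if "s \<in> I" for s
    using sm[OF that, of "Suc (Suc (Suc 0))"] unfolding s3_def s4_def by simp
  have d4: "(s4 has_vector_derivative s5 s) (at s)" if "s \<in> I" for s
    using sm[OF that, of "Suc (Suc (Suc (Suc 0)))"] unfolding s4_def s5_def by simp
  have aa: "\<sigma> s \<bullet> \<sigma> s = 1" if "s \<in> I" for s
    using assms(4) that by (simp add: dot_square_norm)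
  have bb: "s1 s \<bullet> s1 s = 1" if "s \<in> I" for s
    using assms(5) that unfolding s1_def by (simp add: dot_square_norm)
  have ab: "\<sigma> s \<bullet> s1 s = 0" if s: "s \<in> I" for s
  proof -
    have "s1 s \<bullet> \<sigma> s + \<sigma> s \<bullet> s1 s = 0"
      by (rule zero_on_open_deriv[OF assms(1) s, of "\<lambda>s. \<sigma> s \<bullet> \<sigma> s - 1"])
        (auto simp: aa intro!: derivative_eq_intros hfd_inner d0 s)
    then show ?thesis by (simp add: inner_commute)
  qed
  have b2: "s1 s \<bullet> s2 s = 0" if s: "s \<in> I" for s
  proof -
    have "s2 s \<bullet> s1 s + s1 s \<bullet> s2 s = 0"
      by (rule zero_on_open_deriv[OF assms(1) s, of "\<lambda>s. s1 s \<bullet> s1 s - 1"])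
        (auto simp: bb intro!: derivative_eq_intros hfd_inner d1 s)
    then show ?thesis by (simp add: inner_commute)
  qed
  have a2: "\<sigma> s \<bullet> s2 s = -1" if s: "s \<in> I" for s
  proof -
    have "s1 s \<bullet> s1 s + \<sigma> s \<bullet> s2 s = 0"
      by (rule zero_on_open_deriv[OF assms(1) s, of "\<lambda>s. \<sigma> s \<bullet> s1 s"])
        (auto simp: ab intro!: hfd_inner d0 d1 s)
    then show ?thesis using bb[OF s] by simp
  qed
  define N where "N = (\<lambda>s. cross3 (\<sigma> s) (s1 s))"
  define Nd1 where "Nd1 = (\<lambda>s. cross3 (s1 s) (s1 s) + cross3 (\<sigma> s) (s2 s))"
  define Nd2 where "Nd2 = (\<lambda>s. (cross3 (s2 s) (s1 s) + cross3 (s1 s) (s2 s)) + (cross3 (s1 s) (s2 s) + cross3 (\<sigma> s) (s3 s)))"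
  define Nd3 where "Nd3 = (\<lambda>s. ((cross3 (s3 s) (s1 s) + cross3 (s2 s) (s2 s)) + (cross3 (s2 s) (s2 s) + cross3 (s1 s) (s3 s)))
     + ((cross3 (s2 s) (s2 s) + cross3 (s1 s) (s3 s)) + (cross3 (s1 s) (s3 s) + cross3 (\<sigma> s) (s4 s))))"
  define k where "k = (\<lambda>s. s2 s \<bullet> N s)"
  define k1 where "k1 = (\<lambda>s. s3 s \<bullet> N s + s2 s \<bullet> Nd1 s)"
  define k2 where "k2 = (\<lambda>s. (s4 s \<bullet> N s + s3 s \<bullet> Nd1 s) + (s3 s \<bullet> Nd1 s + s2 s \<bullet> Nd2 s))"
  define k3 where "k3 = (\<lambda>s. ((s5 s \<bullet> N s + s4 s \<bullet> Nd1 s) + (s4 s \<bullet> Nd1 s + s3 s \<bullet> Nd2 s))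
     + ((s4 s \<bullet> Nd1 s + s3 s \<bullet> Nd2 s) + (s3 s \<bullet> Nd2 s + s2 s \<bullet> Nd3 s)))"
  have dN0: "(N has_vector_derivative Nd1 s) (at s)" if s: "s \<in> I" for s
    unfolding N_def Nd1_def by (rule hvd_cross[OF d0[OF s] d1[OF s]])
  have dNd1: "(Nd1 has_vector_derivative Nd2 s) (at s)" if s: "s \<in> I" for s
    unfolding Nd1_def Nd2_def
    by (rule has_vector_derivative_add[OF hvd_cross[OF d1[OF s] d1[OF s]] hvd_cross[OF d0[OF s] d2[OF s]]])
  have dNd2: "(Nd2 has_vector_derivative Nd3 s) (at s)" if s: "s \<in> I" for s
    unfolding Nd2_def Nd3_def
    by (intro has_vector_derivative_add hvd_cross d0 d1 d2 d3 s)
  have dk: "(k has_field_derivative k1 s) (at s)" if s: "s \<in> I" for s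
    unfolding k_def k1_def by (rule hfd_inner[OF d2[OF s] dN0[OF s]])
  have dk1: "(k1 has_field_derivative k2 s) (at s)" if s: "s \<in> I" for s
    unfolding k1_def k2_def
    by (intro derivative_intros hfd_inner d2 d3 dN0 dNd1 s)
  have dk2: "(k2 has_field_derivative k3 s) (at s)" if s: "s \<in> I" for s
    unfolding k2_def k3_def
    by (intro derivative_intros hfd_inner d2 d3 d4 dN0 dNd1 dNd2 s)
  have s2e: "s2 s = k s *\<^sub>R N s - \<sigma> s" if s: "s \<in> I" for s
    using expand3[OF aa[OF s] bb[OF s] ab[OF s], of "s2 s"] a2[OF s] b2[OF s]
    unfolding k_def N_def by (simp add: inner_commute)
  have db: "(s1 has_vector_derivative (k s *\<^sub>R N s - \<sigma> s)) (at s)" if s: "s \<in> I" for s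
    using d1[OF s] s2e[OF s] by simp
  have dN: "(N has_vector_derivative (- k s *\<^sub>R s1 s)) (at s)" if s: "s \<in> I" for s
  proof -
    have "Nd1 s = - k s *\<^sub>R s1 s"
      unfolding Nd1_def using s2e[OF s] cross_cross3[of "\<sigma> s" "\<sigma> s" "s1 s"] aa[OF s] ab[OF s]
      by (simp add: N_def cross_mult_right Cross3.right_diff_distrib)
    then show ?thesis using dN0[OF s] by simp
  qed
  interpret cframe I \<sigma> s1 N k k1 k2 k3
  proof
    show "\<And>s. s \<in> I \<Longrightarrow> N s = cross3 (\<sigma> s) (s1 s)" by (simp add: N_def)
  qed (auto simp: assms(1) aa bb ab d0 db dk dk1 dk2 intro: dN[simplified])
  show ?thesis by (rule not_proper)
qed

end
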